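(* Let $\mathbf x\in\mathbb F^6$ with $x_5=x_6=0$. Then for every $n\ge1$, every element of $\mathcal O_{\mathbf x}(n)$ is a linear combination of right-normed products $a_{\sigma(1)}(a_{\sigma(2)}(\cdots(a_{\sigma(n-1)}a_{\sigma(n)})\cdots))$, $\sigma\in S_n$. In particular there is a surjection of $S_n$-modules $\mathbb FS_n\to\mathcal O_{\mathbf x}(n)$.
   Context: Let $\mathbb F$ be a field of characteristic $0$. Let $\mathcal T$ be the free symmetric operad over $\mathbb F$ generated by one binary operation $(a_1,a_2)\mapsto a_1a_2$ with no symmetry; its arity-$n$ component $\mathcal T(n)$ is the vector space with basis all multilinear bracketed (nonassociative) monomials in $a_1,\dots,a_n$, with the right $S_n$-action permuting arguments. For $\mathbf x=(x_1,\dots,x_6)\in\mathbb F^6$, $\mathcal O_{\mathbf x}$ denotes the quotient of $\mathcal T$ by the operad ideal $\mathcal J_{\mathbf x}$ generated by the relation (LR): $(a_1a_2)a_3 = x_1a_1(a_2a_3)+x_2a_1(a_3a_2)+x_3a_2(a_1a_3)+x_4a_2(a_3a_1)+x_5a_3(a_1a_2)+x_6a_3(a_2a_1)$. *)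

theory Defs
  imports "HOL-Library.Multiset" "HOL-Combinatorics.Permutations"
begin

text \<open>Bracketed monomials: binary trees with leaves labelled by argument indices.\<close>
datatype tree = Leaf nat | Node tree tree

fun leaves :: "tree \<Rightarrow> nat list" where
  "leaves (Leaf a) = [a]"
| "leaves (Node t u) = leaves t @ leaves u"

definition multilinear :: "nat \<Rightarrow> tree \<Rightarrow> bool" where
  "multilinear n t \<longleftrightarrow> mset (leaves t) = mset [1..<Suc n]"

text \<open>Vectors: finitely supported formal linear combinations of trees.
  T(n) consists of those supported on multilinear monomials of arity n.\<close>
definition Tn :: "nat \<Rightarrow> (tree \<Rightarrow> 'f::field) set" where
  "Tn n = {v. finite {t. v t \<noteq> 0} \<and> (\<forall>t. v t \<noteq> 0 \<longrightarrow> multilinear n t)}"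

definition basis :: "tree \<Rightarrow> tree \<Rightarrow> 'f::field" where
  "basis t = (\<lambda>s. if s = t then 1 else 0)"

text \<open>Linear extension of a map on basis monomials.\<close>
definition pushf :: "(tree \<Rightarrow> tree) \<Rightarrow> (tree \<Rightarrow> 'f::field) \<Rightarrow> tree \<Rightarrow> 'f" where
  "pushf f v = (\<lambda>s. \<Sum>t \<in> {t. v t \<noteq> 0 \<and> f t = s}. v t)"

fun mapl :: "(nat \<Rightarrow> nat) \<Rightarrow> tree \<Rightarrow> tree" where
  "mapl g (Leaf a) = Leaf (g a)"
| "mapl g (Node t u) = Node (mapl g t) (mapl g u)"

fun subst_leaf :: "nat \<Rightarrow> tree \<Rightarrow> tree \<Rightarrow> tree" where
  "subst_leaf i s (Leaf a) = (if a = i then s else Leaf a)"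
| "subst_leaf i s (Node t u) = Node (subst_leaf i s t) (subst_leaf i s u)"

text \<open>Partial composition t \<circ>_i s, with t of arity m and s of arity k (result of arity m+k-1).\<close>
definition pcomp :: "tree \<Rightarrow> nat \<Rightarrow> nat \<Rightarrow> tree \<Rightarrow> tree" where
  "pcomp t i k s = subst_leaf i (mapl (\<lambda>j. j + i - 1) s)
                     (mapl (\<lambda>j. if i < j then j + k - 1 else j) t)"

definition LR :: "(nat \<Rightarrow> 'f::field) \<Rightarrow> tree \<Rightarrow> 'f" where
  "LR x = (\<lambda>s. basis (Node (Node (Leaf 1) (Leaf 2)) (Leaf 3)) s
     - x 1 * basis (Node (Leaf 1) (Node (Leaf 2) (Leaf 3))) s
     - x 2 * basis (Node (Leaf 1) (Node (Leaf 3) (Leaf 2))) s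
     - x 3 * basis (Node (Leaf 2) (Node (Leaf 1) (Leaf 3))) s
     - x 4 * basis (Node (Leaf 2) (Node (Leaf 3) (Leaf 1))) s
     - x 5 * basis (Node (Leaf 3) (Node (Leaf 1) (Leaf 2))) s
     - x 6 * basis (Node (Leaf 3) (Node (Leaf 2) (Leaf 1))) s)"

text \<open>The operad ideal generated by LR: the smallest family of subspaces J(n) \<subseteq> T(n)
  containing LR in arity 3, stable under the S_n-actions, and under partial compositions
  with arbitrary elements of T on either side (by linearity it suffices to compose with
  basis monomials).\<close>
inductive_set Jx :: "(nat \<Rightarrow> 'f::field) \<Rightarrow> (nat \<times> (tree \<Rightarrow> 'f)) set"
  for x :: "nat \<Rightarrow> 'f" where
  gen: "(3, LR x) \<in> Jx x"
| zero: "(n, (\<lambda>_. 0)) \<in> Jx x"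
| add: "(n, v) \<in> Jx x \<Longrightarrow> (n, w) \<in> Jx x \<Longrightarrow> (n, (\<lambda>s. v s + w s)) \<in> Jx x"
| smult: "(n, v) \<in> Jx x \<Longrightarrow> (n, (\<lambda>s. c * v s)) \<in> Jx x"
| perm: "(n, v) \<in> Jx x \<Longrightarrow> \<sigma> permutes {1..n} \<Longrightarrow> (n, pushf (mapl \<sigma>) v) \<in> Jx x"
| comp_left: "(m, v) \<in> Jx x \<Longrightarrow> multilinear k s \<Longrightarrow> 1 \<le> k \<Longrightarrow> 1 \<le> i \<Longrightarrow> i \<le> m \<Longrightarrow>
      (m + k - 1, pushf (\<lambda>t. pcomp t i k s) v) \<in> Jx x"
| comp_right: "(k, v) \<in> Jx x \<Longrightarrow> multilinear m s \<Longrightarrow> 1 \<le> i \<Longrightarrow> i \<le> m \<Longrightarrow>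
      (m + k - 1, pushf (\<lambda>t. pcomp s i k t) v) \<in> Jx x"

inductive_set spanF :: "(tree \<Rightarrow> 'f::field) set \<Rightarrow> (tree \<Rightarrow> 'f) set" for S where
  zero: "(\<lambda>_. 0) \<in> spanF S"
| step: "u \<in> S \<Longrightarrow> w \<in> spanF S \<Longrightarrow> (\<lambda>s. c * u s + w s) \<in> spanF S"

fun rnorm :: "nat list \<Rightarrow> tree" where
  "rnorm [] = Leaf 0"
| "rnorm [a] = Leaf a"
| "rnorm (a # as) = Node (Leaf a) (rnorm as)"

definition right_normed :: "nat \<Rightarrow> (nat \<Rightarrow> nat) \<Rightarrow> tree" where
  "right_normed n \<sigma> = rnorm (map \<sigma> [1..<Suc n])"

end

theory Submission
  imports Defs
begin

fun fill :: "tree list \<Rightarrow> tree \<Rightarrow> tree" where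
  "fill [] t = t"
| "fill (l # ls) t = Node l (fill ls t)"

fun ss :: "tree \<Rightarrow> tree \<Rightarrow> tree \<Rightarrow> tree \<Rightarrow> tree" where
  "ss a b c (Leaf j) = (if j = 1 then a else if j = 2 then b else if j = 3 then c else Leaf j)"
| "ss a b c (Node l r) = Node (ss a b c l) (ss a b c r)"

fun lsize :: "tree \<Rightarrow> nat" where
  "lsize (Leaf _) = 0"
| "lsize (Node l r) = size l"

lemma leaves_ne[simp]: "leaves t \<noteq> []"
  by (induction t) auto

lemma leaves_fill[simp]: "leaves (fill ls t) = concat (map leaves ls) @ leaves t"
  by (induction ls) auto

lemma leaves_mapl[simp]: "leaves (mapl f t) = map f (leaves t)"
  by (induction t) auto

lemma mapl_mapl[simp]: "mapl f (mapl g t) = mapl (f \<circ> g) t"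
  by (induction t) auto

lemma mapl_cong: "(\<And>j. j \<in> set (leaves t) \<Longrightarrow> f j = g j) \<Longrightarrow> mapl f t = mapl g t"
  by (induction t) auto

lemma mapl_id: "(\<And>j. j \<in> set (leaves t) \<Longrightarrow> f j = j) \<Longrightarrow> mapl f t = t"
  by (induction t) auto

lemma subst_leaf_notin: "i \<notin> set (leaves t) \<Longrightarrow> subst_leaf i s t = t"
  by (induction t) auto

lemma pcomp_Node[simp]: "pcomp (Node l r) i k s = Node (pcomp l i k s) (pcomp r i k s)"
  by (simp add: pcomp_def)

lemma pcomp_Leaf[simp]: "1 \<le> k \<Longrightarrow> pcomp (Leaf j) i k s =
   (if j = i then mapl (\<lambda>j. j + i - 1) s else Leaf (if i < j then j + k - 1 else j))"
  by (auto simp: pcomp_def)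

lemma pcomp_notin: "1 \<le> k \<Longrightarrow> i \<notin> set (leaves t) \<Longrightarrow> pcomp t i k s = mapl (\<lambda>j. if i < j then j + k - 1 else j) t"
  unfolding pcomp_def
  by (rule subst_leaf_notin) auto

lemma mapl_fill: "mapl f (fill ls t) = fill (map (mapl f) ls) (mapl f t)"
  by (induction ls) auto

lemma mapl_ss: "set (leaves p) \<subseteq> {1,2,3} \<Longrightarrow> mapl f (ss a b c p) = ss (mapl f a) (mapl f b) (mapl f c) p"
  by (induction p) auto

lemma leaves_ss: "set (leaves p) \<subseteq> {1,2,3} \<Longrightarrow> set (leaves (ss a b c p)) \<subseteq> set (leaves a) \<union> set (leaves b) \<union> set (leaves c)"
  by (induction p) auto

lemma fill_snoc: "fill (ls @ [l]) t = fill ls (Node l t)"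
  by (induction ls) auto

lemma leaves_rnorm: "q \<noteq> [] \<Longrightarrow> leaves (rnorm q) = q"
  by (induction q rule: rnorm.induct) auto

lemma fill_rnorm: "q \<noteq> [] \<Longrightarrow> fill (map Leaf as) (rnorm q) = rnorm (as @ q)"
proof (induction as)
  case (Cons a as) then show ?case by (cases "as @ q") auto
qed auto

lemma map_sub_upt: "map (\<lambda>j. j - m) [m + a..<m + b] = [a..<b]"
  by (induction b) auto

lemma perm_of_list:
  assumes "mset p = mset [1..<Suc n]"
  shows "\<exists>\<sigma>. \<sigma> permutes {1..n} \<and> map \<sigma> [1..<Suc n] = p"
proof -
  have len: "length p = n" using assms by (metis length_upt diff_Suc_1 size_mset)
  have dist: "distinct p" using assms by (metis distinct_upt mset_eq_imp_distinct_iff)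
  have setp: "set p = {1..n}" using assms by (metis atLeastLessThanSuc_atLeastAtMost mset_eq_setD set_upt)
  define \<sigma> where "\<sigma> i = (if i \<in> {1..n} then p ! (i - 1) else i)" for i
  have "bij_betw \<sigma> {1..n} {1..n}"
  proof (rule bij_betw_imageI)
    show "inj_on \<sigma> {1..n}"
      using dist len unfolding inj_on_def \<sigma>_def
      by (auto simp: nth_eq_iff_index_eq)
    show "\<sigma> ` {1..n} = {1..n}"
    proof
      show "\<sigma> ` {1..n} \<subseteq> {1..n}"
      proof
        fix y assume "y \<in> \<sigma> ` {1..n}"
        then obtain i where i: "i \<in> {1..n}" "y = p ! (i - 1)" by (auto simp: \<sigma>_def)
        then have "y \<in> set p" using len by auto
        then show "y \<in> {1..n}" using setp by simp
      qed
      show "{1..n} \<subseteq> \<sigma> ` {1..n}"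
      proof
        fix y assume "y \<in> {1..n}"
        then obtain k where k: "k < n" "p ! k = y" using setp len by (metis in_set_conv_nth)
        then have "\<sigma> (Suc k) = y" by (simp add: \<sigma>_def)
        then show "y \<in> \<sigma> ` {1..n}" using k by force
      qed
    qed
  qed
  then have "\<sigma> permutes {1..n}" by (rule bij_imp_permutes) (auto simp: \<sigma>_def)
  moreover have "map \<sigma> [1..<Suc n] = p"
    by (rule nth_equalityI) (auto simp: len \<sigma>_def nth_upt simp del: upt_Suc)
  ultimately show ?thesis by blast
qed


definition lc :: "(nat \<Rightarrow> 'f::field) \<Rightarrow> (nat \<Rightarrow> tree) \<Rightarrow> nat \<Rightarrow> tree \<Rightarrow> 'f" where
  "lc c p N = (\<lambda>s. \<Sum>i<N. c i * basis (p i) s)"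

lemma pushf_lc: "pushf F (lc c p N) = lc c (F \<circ> p) N"
proof (rule ext)
  fix s
  let ?v = "lc c p N"
  let ?S = "p ` {..<N}"
  have supp: "{t. ?v t \<noteq> 0} \<subseteq> ?S"
  proof
    fix t assume "t \<in> {t. ?v t \<noteq> 0}"
    then have "(\<Sum>i<N. c i * basis (p i) t) \<noteq> 0" by (simp add: lc_def)
    then obtain i where "i < N" "c i * basis (p i) t \<noteq> 0" by (meson sum.neutral lessThan_iff)
    then show "t \<in> ?S" by (auto simp: basis_def split: if_splits)
  qed
  have "pushf F ?v s = (\<Sum>t\<in>{t\<in>?S. F t = s}. ?v t)"
    unfolding pushf_def by (rule sum.mono_neutral_left) (use supp in auto)
  also have "\<dots> = (\<Sum>t\<in>?S. if F t = s then ?v t else 0)"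
    by (simp add: sum.inter_filter)
  also have "\<dots> = (\<Sum>t\<in>?S. \<Sum>i<N. if F t = s \<and> p i = t then c i else 0)"
    by (rule sum.cong) (auto simp: lc_def basis_def intro: sum.cong)
  also have "\<dots> = (\<Sum>i<N. \<Sum>t\<in>?S. if F t = s \<and> p i = t then c i else 0)"
    by (rule sum.swap)
  also have "\<dots> = (\<Sum>i<N. if F (p i) = s then c i else 0)"
  proof (rule sum.cong)
    fix i assume i: "i \<in> {..<N}"
    have "(\<Sum>t\<in>?S. if F t = s \<and> p i = t then c i else 0) = (\<Sum>t\<in>?S. if t = p i then (if F t = s then c i else 0) else 0)"
      by (rule sum.cong) auto
    also have "\<dots> = (if F (p i) = s then c i else 0)" using i by (simp add: sum.delta')
    finally show "(\<Sum>t\<in>?S. if F t = s \<and> p i = t then c i else 0) = (if F (p i) = s then c i else 0)" .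
  qed simp
  also have "\<dots> = lc c (F \<circ> p) N s"
    by (auto simp: lc_def basis_def intro: sum.cong)
  finally show "pushf F ?v s = lc c (F \<circ> p) N s" .
qed

lemma lc_cong: "(\<And>i. i < N \<Longrightarrow> p i = q i) \<Longrightarrow> lc c p N = lc c q N"
  unfolding lc_def by (auto intro!: ext sum.cong)

definition pat :: "nat \<Rightarrow> tree" where
  "pat i = [Node (Node (Leaf 1) (Leaf 2)) (Leaf 3),
            Node (Leaf 1) (Node (Leaf 2) (Leaf 3)),
            Node (Leaf 1) (Node (Leaf 3) (Leaf 2)),
            Node (Leaf 2) (Node (Leaf 1) (Leaf 3)),
            Node (Leaf 2) (Node (Leaf 3) (Leaf 1)),
            Node (Leaf 3) (Node (Leaf 1) (Leaf 2)),
            Node (Leaf 3) (Node (Leaf 2) (Leaf 1))] ! i"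

definition coef :: "(nat \<Rightarrow> 'f::field) \<Rightarrow> nat \<Rightarrow> 'f" where
  "coef x i = (if i = 0 then 1 else - x i)"

lemma LR_lc: "LR x = lc (coef x) pat 7"
  by (rule ext) (simp add: LR_def lc_def coef_def pat_def numeral_eq_Suc)

lemma less7: "i < (7::nat) \<Longrightarrow> i = 0 \<or> i = 1 \<or> i = 2 \<or> i = 3 \<or> i = 4 \<or> i = 5 \<or> i = 6"
  by auto

lemma pat_leaves: "i < 7 \<Longrightarrow> set (leaves (pat i)) \<subseteq> {1,2,3}"
  by (drule less7) (auto simp: pat_def)

lemma J_eq: "(n, f) \<in> Jx x \<Longrightarrow> f = g \<Longrightarrow> (n, g) \<in> Jx x" by simp

lemma J_diff: "(n, f) \<in> Jx x \<Longrightarrow> (n, g) \<in> Jx x \<Longrightarrow> (n, \<lambda>s. f s - g s) \<in> Jx x"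
proof -
  assume f: "(n, f) \<in> Jx x" and g: "(n, g) \<in> Jx x"
  have "(n, \<lambda>s. f s + (-1) * g s) \<in> Jx x" by (rule Jx.add[OF f Jx.smult[OF g]])
  then show ?thesis by simp
qed

lemma J_add: "(n, f) \<in> Jx x \<Longrightarrow> (n, g) \<in> Jx x \<Longrightarrow> (n, \<lambda>s. f s + g s) \<in> Jx x"
  by (rule Jx.add)

lemma spanF_add: "w \<in> spanF S \<Longrightarrow> w' \<in> spanF S \<Longrightarrow> (\<lambda>s. w s + w' s) \<in> spanF S"
proof (induction w rule: spanF.induct)
  case zero then show ?case by simp
next
  case (step u w c)
  have "(\<lambda>s. c * u s + (w s + w' s)) \<in> spanF S" by (rule spanF.step[OF step(1) step(3)[OF step(4)]])
  then show ?case by (simp add: add.assoc)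
qed

lemma spanF_smult: "w \<in> spanF S \<Longrightarrow> (\<lambda>s. d * w s) \<in> spanF S"
proof (induction w rule: spanF.induct)
  case zero then show ?case using spanF.zero by simp
next
  case (step u w c)
  have "(\<lambda>s. (d * c) * u s + d * w s) \<in> spanF S" by (rule spanF.step[OF step(1) step(3)])
  then show ?case by (simp add: algebra_simps)
qed

definition good :: "(nat \<Rightarrow> 'f::field) \<Rightarrow> nat \<Rightarrow> (tree \<Rightarrow> 'f) \<Rightarrow> bool" where
  "good x n v \<longleftrightarrow> (\<exists>w \<in> spanF {basis (right_normed n \<sigma>) | \<sigma>. \<sigma> permutes {1..n}}. (n, (\<lambda>s. v s - w s)) \<in> Jx x)"

lemma good_zero: "good x n (\<lambda>_. 0)"
  unfolding good_def by (rule bexI[of _ "\<lambda>_. 0"]) (auto intro: Jx.zero spanF.zero)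

lemma good_add: "good x n v \<Longrightarrow> good x n v' \<Longrightarrow> good x n (\<lambda>s. v s + v' s)"
  unfolding good_def
proof (elim bexE)
  fix w w' assume w: "w \<in> spanF {basis (right_normed n \<sigma>) | \<sigma>. \<sigma> permutes {1..n}}" and w': "w' \<in> spanF {basis (right_normed n \<sigma>) | \<sigma>. \<sigma> permutes {1..n}}"
    and J1: "(n, \<lambda>s. v s - w s) \<in> Jx x" and J2: "(n, \<lambda>s. v' s - w' s) \<in> Jx x"
  show "\<exists>w\<in>spanF {basis (right_normed n \<sigma>) | \<sigma>. \<sigma> permutes {1..n}}. (n, \<lambda>s. v s + v' s - w s) \<in> Jx x"
  proof (rule bexI[of _ "\<lambda>s. w s + w' s"])
    show "(\<lambda>s. w s + w' s) \<in> spanF {basis (right_normed n \<sigma>) | \<sigma>. \<sigma> permutes {1..n}}" by (rule spanF_add[OF w w'])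
    show "(n, \<lambda>s. v s + v' s - (w s + w' s)) \<in> Jx x"
      using J_add[OF J1 J2] by (simp add: algebra_simps)
  qed
qed

lemma good_smult: "good x n v \<Longrightarrow> good x n (\<lambda>s. d * v s)"
  unfolding good_def
proof (elim bexE)
  fix w assume w: "w \<in> spanF {basis (right_normed n \<sigma>) | \<sigma>. \<sigma> permutes {1..n}}"
    and J1: "(n, \<lambda>s. v s - w s) \<in> Jx x"
  show "\<exists>w\<in>spanF {basis (right_normed n \<sigma>) | \<sigma>. \<sigma> permutes {1..n}}. (n, \<lambda>s. d * v s - w s) \<in> Jx x"
  proof (rule bexI[of _ "\<lambda>s. d * w s"])
    show "(\<lambda>s. d * w s) \<in> spanF {basis (right_normed n \<sigma>) | \<sigma>. \<sigma> permutes {1..n}}" by (rule spanF_smult[OF w])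
    show "(n, \<lambda>s. d * v s - d * w s) \<in> Jx x"
      using Jx.smult[OF J1, of d] by (simp add: algebra_simps)
  qed
qed

lemma good_J: "(n, \<lambda>s. v s - u s) \<in> Jx x \<Longrightarrow> good x n u \<Longrightarrow> good x n v"
  unfolding good_def
proof (elim bexE)
  fix w assume J0: "(n, \<lambda>s. v s - u s) \<in> Jx x" and w: "w \<in> spanF {basis (right_normed n \<sigma>) | \<sigma>. \<sigma> permutes {1..n}}"
    and J1: "(n, \<lambda>s. u s - w s) \<in> Jx x"
  show "\<exists>w\<in>spanF {basis (right_normed n \<sigma>) | \<sigma>. \<sigma> permutes {1..n}}. (n, \<lambda>s. v s - w s) \<in> Jx x"
    using J_add[OF J0 J1] w by (intro bexI[of _ w]) (simp_all add: algebra_simps)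
qed

lemma good_lc: "(\<And>i. i < N \<Longrightarrow> c i = 0 \<or> good x n (basis (q i))) \<Longrightarrow> good x n (lc c q N)"
proof (induction N)
  case 0 then show ?case by (simp add: lc_def good_zero)
next
  case (Suc N)
  have g1: "good x n (lc c q N)" using Suc by auto
  have g2: "good x n (\<lambda>s. c N * basis (q N) s)"
  proof (cases "c N = 0")
    case True then show ?thesis using good_zero by simp
  next
    case False then show ?thesis using Suc.prems[of N] by (auto intro: good_smult)
  qed
  have "lc c q (Suc N) = (\<lambda>s. lc c q N s + c N * basis (q N) s)" by (simp add: lc_def)
  then show ?case using good_add[OF g1 g2] by simp
qed


lemma base_comp:
  assumes "set (leaves p) \<subseteq> {1,2,3}" "1 \<le> k1" "1 \<le> k2" "1 \<le> k3"
    and "\<forall>j\<in>set (leaves b0). 1 \<le> j" "\<forall>j\<in>set (leaves c0). 1 \<le> j"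
    and "mapl (\<lambda>j. j + k1) b0 = b" "mapl (\<lambda>j. j + (k1 + k2)) c0 = c"
  shows "pcomp (pcomp (pcomp p 3 k3 c0) 2 k2 b0) 1 k1 a = ss a b c p"
  using assms(1)
proof (induction p)
  case (Leaf j)
  then have "j = 1 \<or> j = 2 \<or> j = 3" by auto
  then show ?case
  proof (elim disjE)
    assume "j = 1" then show ?thesis using assms by (simp add: mapl_id)
  next
    assume j: "j = 2"
    have "pcomp (mapl (\<lambda>j. j + 2 - 1) b0) 1 k1 a = mapl (\<lambda>j. if 1 < j then j + k1 - 1 else j) (mapl (\<lambda>j. j + 2 - 1) b0)"
      using assms by (intro pcomp_notin) auto
    also have "\<dots> = mapl (\<lambda>j. j + k1) b0" unfolding mapl_mapl by (rule mapl_cong) (use assms in auto)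
    finally show ?thesis using j assms by simp
  next
    assume j: "j = 3"
    have "pcomp (mapl (\<lambda>j. j + 3 - 1) c0) 2 k2 b0 = mapl (\<lambda>j. if 2 < j then j + k2 - 1 else j) (mapl (\<lambda>j. j + 3 - 1) c0)"
      using assms by (intro pcomp_notin) auto
    also have "\<dots> = mapl (\<lambda>j. j + (k2 + 1)) c0" unfolding mapl_mapl by (rule mapl_cong) (use assms in auto)
    finally have e1: "pcomp (mapl (\<lambda>j. j + 3 - 1) c0) 2 k2 b0 = mapl (\<lambda>j. j + (k2 + 1)) c0" .
    have "pcomp (mapl (\<lambda>j. j + (k2 + 1)) c0) 1 k1 a = mapl (\<lambda>j. if 1 < j then j + k1 - 1 else j) (mapl (\<lambda>j. j + (k2 + 1)) c0)"
      using assms by (intro pcomp_notin) auto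
    also have "\<dots> = mapl (\<lambda>j. j + (k1 + k2)) c0" unfolding mapl_mapl by (rule mapl_cong) (use assms in auto)
    finally show ?thesis using j assms e1 by simp
  qed
qed simp

lemma upt_append_split: "i \<le> j \<Longrightarrow> xs @ ys = [i..<j] \<Longrightarrow> xs = [i..<i + length xs] \<and> ys = [i + length xs..<j]"
proof -
  assume ij: "i \<le> j" and h: "xs @ ys = [i..<j]"
  have "length xs + length ys = j - i" using arg_cong[OF h, of length] by simp
  then have l: "i + length xs \<le> j" using ij by linarith
  have "take (length xs) [i..<j] = xs" "drop (length xs) [i..<j] = ys" using h by (metis append_eq_conv_conj)+
  then show ?thesis using l by (simp add: take_upt drop_upt)
qed

lemma upt_split3:
  assumes "xs @ ys @ zs = [1..<Suc n]" "xs \<noteq> []" "ys \<noteq> []" "zs \<noteq> []"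
  shows "\<exists>k1 k2 k3. 1 \<le> k1 \<and> 1 \<le> k2 \<and> 1 \<le> k3 \<and> n = k1 + k2 + k3 \<and> xs = [1..<Suc k1] \<and>
     ys = [k1 + 1..<k1 + k2 + 1] \<and> zs = [k1 + k2 + 1..<k1 + k2 + k3 + 1]"
proof -
  have len: "length xs + length ys + length zs = n" using arg_cong[OF assms(1), of length] by (simp del: upt_Suc)
  from upt_append_split[OF _ assms(1)] have a: "xs = [1..<1 + length xs]" "ys @ zs = [1 + length xs..<Suc n]" by auto
  from upt_append_split[OF _ a(2)] len have b: "ys = [1 + length xs..<1 + length xs + length ys]" "zs = [1 + length xs + length ys..<Suc n]" by auto
  show ?thesis
  proof (intro exI conjI)
    show "1 \<le> length xs" using assms(2) by (cases xs) auto
    show "1 \<le> length ys" using assms(3) by (cases ys) auto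
    show "1 \<le> length zs" using assms(4) by (cases zs) auto
    show "n = length xs + length ys + length zs" using len by simp
    show "xs = [1..<Suc (length xs)]" using a(1) by (simp del: upt_Suc)
    show "ys = [length xs + 1..<length xs + length ys + 1]" using b(1) by (simp del: upt_Suc add: add.commute)
    show "zs = [length xs + length ys + 1..<length xs + length ys + length zs + 1]" using b(2) len by (simp del: upt_Suc add: add.commute)
  qed
qed

lemma mset_upt_shift: "leaves t = [d + 1..<d + k + 1] \<Longrightarrow> leaves (mapl (\<lambda>j. j - d) t) = [1..<Suc k]"
  using map_sub_upt[of d 1 "k+1"] by simp

lemma S1_base:
  assumes "leaves (Node (Node a b) c) = [1..<Suc n]"
  shows "(n, lc (coef x) (\<lambda>i. ss a b c (pat i)) 7) \<in> Jx x"
proof -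
  have "leaves a @ leaves b @ leaves c = [1..<Suc n]" using assms by simp
  then obtain k1 k2 k3 where k: "1 \<le> k1" "1 \<le> k2" "1 \<le> k3" "n = k1 + k2 + k3"
    "leaves a = [1..<Suc k1]" "leaves b = [k1 + 1..<k1 + k2 + 1]" "leaves c = [k1 + k2 + 1..<k1 + k2 + k3 + 1]"
    using upt_split3[of "leaves a" "leaves b" "leaves c" n] by auto
  define b0 where "b0 = mapl (\<lambda>j. j - k1) b"
  define c0 where "c0 = mapl (\<lambda>j. j - (k1 + k2)) c"
  have lb0: "leaves b0 = [1..<Suc k2]" unfolding b0_def by (rule mset_upt_shift) (simp add: k)
  have lc0: "leaves c0 = [1..<Suc k3]" unfolding c0_def by (rule mset_upt_shift) (simp add: k)
  have bb: "mapl (\<lambda>j. j + k1) b0 = b" unfolding b0_def mapl_mapl by (rule mapl_id) (use k in auto)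
  have cc: "mapl (\<lambda>j. j + (k1 + k2)) c0 = c" unfolding c0_def mapl_mapl by (rule mapl_id) (use k in auto)
  have J0: "(3, lc (coef x) pat 7) \<in> Jx x" using Jx.gen[of x] by (simp add: LR_lc)
  have J1: "(3 + k3 - 1, pushf (\<lambda>t. pcomp t 3 k3 c0) (lc (coef x) pat 7)) \<in> Jx x"
    by (rule Jx.comp_left[OF J0]) (use k in \<open>auto simp: multilinear_def lc0\<close>)
  have J2: "(3 + k3 - 1 + k2 - 1, pushf (\<lambda>t. pcomp t 2 k2 b0) (pushf (\<lambda>t. pcomp t 3 k3 c0) (lc (coef x) pat 7))) \<in> Jx x"
    by (rule Jx.comp_left[OF J1]) (use k in \<open>auto simp: multilinear_def lb0\<close>)
  have J3: "(3 + k3 - 1 + k2 - 1 + k1 - 1, pushf (\<lambda>t. pcomp t 1 k1 a) (pushf (\<lambda>t. pcomp t 2 k2 b0) (pushf (\<lambda>t. pcomp t 3 k3 c0) (lc (coef x) pat 7)))) \<in> Jx x"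
    by (rule Jx.comp_left[OF J2]) (use k in \<open>auto simp: multilinear_def\<close>)
  have "pushf (\<lambda>t. pcomp t 1 k1 a) (pushf (\<lambda>t. pcomp t 2 k2 b0) (pushf (\<lambda>t. pcomp t 3 k3 c0) (lc (coef x) pat 7)))
     = lc (coef x) (\<lambda>i. pcomp (pcomp (pcomp (pat i) 3 k3 c0) 2 k2 b0) 1 k1 a) 7"
    by (simp add: pushf_lc comp_def)
  also have "\<dots> = lc (coef x) (\<lambda>i. ss a b c (pat i)) 7"
    by (rule lc_cong, rule base_comp) (use pat_leaves k lb0 lc0 bb cc in auto)
  finally have "(3 + k3 - 1 + k2 - 1 + k1 - 1, lc (coef x) (\<lambda>i. ss a b c (pat i)) 7) \<in> Jx x" using J3 by simp
  moreover have "3 + k3 - 1 + k2 - 1 + k1 - 1 = n" using k by simp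
  ultimately show ?thesis by simp
qed


lemma unshift: "\<forall>j\<in>set (leaves t). d < j \<Longrightarrow> mapl (\<lambda>j. j + d) (mapl (\<lambda>j. j - d) t) = t"
  unfolding mapl_mapl by (rule mapl_id) auto

lemma S1_aux:
  "length ls0 = N \<Longrightarrow> leaves (fill ls0 (Node (Node a b) c)) = [1..<Suc n] \<Longrightarrow>
   (n, lc (coef x) (\<lambda>i. fill ls0 (ss a b c (pat i))) 7) \<in> Jx x"
proof (induction N arbitrary: ls0 a b c n)
  case 0 then show ?case using S1_base by simp
next
  case (Suc N)
  then obtain l ls where ls0: "ls0 = l # ls" and lenN: "length ls = N" by (cases ls0) auto
  note Cons_prems = Suc.prems(2)[unfolded ls0]
  let ?T = "fill ls (Node (Node a b) c)"
  have h: "leaves l @ leaves ?T = [1..<Suc n]" using Cons_prems by (simp only: fill.simps leaves.simps)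
  define d where "d = length (leaves l)"
  have n1: "1 \<le> Suc n" by simp
  from upt_append_split[OF n1 h] have hl: "leaves l = [1..<Suc d]" and hT: "leaves ?T = [Suc d..<Suc n]"
    by (simp_all add: d_def)
  have d1: "1 \<le> d" using hl by (cases d) auto
  have dn: "d < n" using hT leaves_ne[of ?T] by (cases "d < n") auto
  define D where "D = mapl (\<lambda>j. j - d)"
  have gt: "\<forall>j \<in> set (leaves ?T). d < j"
  proof
    fix j assume "j \<in> set (leaves ?T)"
    then have "j \<in> set [Suc d..<Suc n]" using hT by (simp only:)
    then show "d < j" by auto
  qed
  have DT: "fill (map D ls) (Node (Node (D a) (D b)) (D c)) = D ?T"
    by (simp add: D_def mapl_fill)
  have "leaves (D ?T) = map (\<lambda>j. j - d) [d + 1..<d + (n - d) + 1]"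
    unfolding D_def leaves_mapl hT using dn by simp
  also have "\<dots> = [1..<Suc (n - d)]" using map_sub_upt[of d 1 "n - d + 1"] by simp
  finally have LD: "leaves (D ?T) = [1..<Suc (n - d)]" .
  have IH: "(n - d, lc (coef x) (\<lambda>i. fill (map D ls) (ss (D a) (D b) (D c) (pat i))) 7) \<in> Jx x"
  proof (rule Suc.IH)
    show "length (map D ls) = N" using lenN by simp
    show "leaves (fill (map D ls) (Node (Node (D a) (D b)) (D c))) = [1..<Suc (n - d)]"
      using LD DT by (simp only:)
  qed
  define s where "s = Node l (Leaf (Suc d))"
  have ms: "multilinear (Suc d) s" unfolding multilinear_def s_def by (simp add: hl)
  have J1: "(Suc d + (n - d) - 1, pushf (\<lambda>t. pcomp s (Suc d) (n - d) t) (lc (coef x) (\<lambda>i. fill (map D ls) (ss (D a) (D b) (D c) (pat i))) 7)) \<in> Jx x"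
    by (rule Jx.comp_right[OF IH ms]) auto
  have pc: "pcomp s (Suc d) (n - d) u = Node l (mapl (\<lambda>j. j + d) u)" for u
  proof -
    have "pcomp l (Suc d) (n - d) u = mapl (\<lambda>j. if Suc d < j then j + (n - d) - 1 else j) l"
      by (rule pcomp_notin) (use hl dn in auto)
    also have "\<dots> = l" by (rule mapl_id) (use hl in auto)
    finally show ?thesis unfolding s_def using dn by simp
  qed
  have lsid: "map (mapl (\<lambda>j. j + d) \<circ> D) ls = ls"
  proof (rule map_idI)
    fix t assume "t \<in> set ls"
    then have "\<forall>j\<in>set (leaves t). d < j" using gt by auto
    then show "(mapl (\<lambda>j. j + d) \<circ> D) t = t" unfolding D_def comp_def by (rule unshift)
  qed
  have ea: "mapl (\<lambda>j. j + d) (D a) = a" "mapl (\<lambda>j. j + d) (D b) = b" "mapl (\<lambda>j. j + d) (D c) = c"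
    unfolding D_def by (rule unshift; use gt in simp)+
  have "pushf (\<lambda>t. pcomp s (Suc d) (n - d) t) (lc (coef x) (\<lambda>i. fill (map D ls) (ss (D a) (D b) (D c) (pat i))) 7)
      = lc (coef x) (\<lambda>i. Node l (mapl (\<lambda>j. j + d) (fill (map D ls) (ss (D a) (D b) (D c) (pat i))))) 7"
    by (simp add: pushf_lc comp_def pc)
  also have "\<dots> = lc (coef x) (\<lambda>i. fill (l # ls) (ss a b c (pat i))) 7"
  proof (rule lc_cong)
    fix i :: nat assume "i < 7"
    then have pl: "set (leaves (pat i)) \<subseteq> {1,2,3}" by (rule pat_leaves)
    show "Node l (mapl (\<lambda>j. j + d) (fill (map D ls) (ss (D a) (D b) (D c) (pat i)))) = fill (l # ls) (ss a b c (pat i))"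
      by (simp add: mapl_fill mapl_ss[OF pl] ea lsid del: mapl_mapl)
  qed
  finally have "(Suc d + (n - d) - 1, lc (coef x) (\<lambda>i. fill (l # ls) (ss a b c (pat i))) 7) \<in> Jx x"
    using J1 by (simp only:)
  moreover have "Suc d + (n - d) - 1 = n" using dn by simp
  ultimately show ?case unfolding ls0 by (simp only:)
qed

lemma S1:
  "leaves (fill ls (Node (Node a b) c)) = [1..<Suc n] \<Longrightarrow>
   (n, lc (coef x) (\<lambda>i. fill ls (ss a b c (pat i))) 7) \<in> Jx x"
  by (rule S1_aux[OF refl])


lemma S2:
  assumes "multilinear n (fill ls (Node (Node a b) c))"
  shows "(n, lc (coef x) (\<lambda>i. fill ls (ss a b c (pat i))) 7) \<in> Jx x"
proof -
  let ?T = "fill ls (Node (Node a b) c)"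
  obtain \<sigma> where \<sigma>: "\<sigma> permutes {1..n}" "map \<sigma> [1..<Suc n] = leaves ?T"
    using perm_of_list[of "leaves ?T" n] assms unfolding multilinear_def by metis
  define \<tau> where "\<tau> = inv \<sigma>"
  have inv1: "mapl \<sigma> (mapl \<tau> t) = t" for t
    unfolding mapl_mapl \<tau>_def by (rule mapl_id) (simp add: permutes_inverses(1)[OF \<sigma>(1)])
  have "leaves (mapl \<tau> ?T) = map \<tau> (map \<sigma> [1..<Suc n])" by (simp only: leaves_mapl \<sigma>(2))
  also have "\<dots> = [1..<Suc n]" by (simp add: \<tau>_def comp_def permutes_inverses(2)[OF \<sigma>(1)] del: upt_Suc)
  finally have "leaves (fill (map (mapl \<tau>) ls) (Node (Node (mapl \<tau> a) (mapl \<tau> b)) (mapl \<tau> c))) = [1..<Suc n]"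
    by (simp add: mapl_fill del: upt_Suc leaves_fill)
  then have J1: "(n, lc (coef x) (\<lambda>i. fill (map (mapl \<tau>) ls) (ss (mapl \<tau> a) (mapl \<tau> b) (mapl \<tau> c) (pat i))) 7) \<in> Jx x"
    by (rule S1)
  have J2: "(n, pushf (mapl \<sigma>) (lc (coef x) (\<lambda>i. fill (map (mapl \<tau>) ls) (ss (mapl \<tau> a) (mapl \<tau> b) (mapl \<tau> c) (pat i))) 7)) \<in> Jx x"
    by (rule Jx.perm[OF J1 \<sigma>(1)])
  have "pushf (mapl \<sigma>) (lc (coef x) (\<lambda>i. fill (map (mapl \<tau>) ls) (ss (mapl \<tau> a) (mapl \<tau> b) (mapl \<tau> c) (pat i))) 7)
     = lc (coef x) (\<lambda>i. mapl \<sigma> (fill (map (mapl \<tau>) ls) (ss (mapl \<tau> a) (mapl \<tau> b) (mapl \<tau> c) (pat i)))) 7"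
    by (simp add: pushf_lc comp_def)
  also have "\<dots> = lc (coef x) (\<lambda>i. fill ls (ss a b c (pat i))) 7"
  proof (rule lc_cong)
    fix i :: nat assume "i < 7"
    then have pl: "set (leaves (pat i)) \<subseteq> {1,2,3}" by (rule pat_leaves)
    show "mapl \<sigma> (fill (map (mapl \<tau>) ls) (ss (mapl \<tau> a) (mapl \<tau> b) (mapl \<tau> c) (pat i))) = fill ls (ss a b c (pat i))"
      by (simp add: mapl_fill mapl_ss[OF pl] inv1 comp_def del: mapl_mapl)
  qed
  finally show ?thesis using J2 by simp
qed

lemma good_rnorm:
  assumes "q \<noteq> []" "multilinear n (rnorm q)"
  shows "good x n (basis (rnorm q))"
proof -
  have mq: "mset q = mset [1..<Suc n]" using assms by (simp add: multilinear_def leaves_rnorm)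
  obtain \<sigma> where \<sigma>: "\<sigma> permutes {1..n}" "map \<sigma> [1..<Suc n] = q"
    using perm_of_list[OF mq] by blast
  have rn: "right_normed n \<sigma> = rnorm q" unfolding right_normed_def using \<sigma>(2) by simp
  have u: "basis (right_normed n \<sigma>) \<in> {basis (right_normed n \<sigma>) | \<sigma>. \<sigma> permutes {1..n}}"
    using \<sigma>(1) by blast
  have "(\<lambda>s. 1 * basis (right_normed n \<sigma>) s + 0) \<in> spanF {basis (right_normed n \<sigma>) | \<sigma>. \<sigma> permutes {1..n}}"
    using spanF.step[OF u spanF.zero, of 1] by simp
  then have "basis (rnorm q) \<in> spanF {basis (right_normed n \<sigma>) | \<sigma>. \<sigma> permutes {1..n}}" by (simp add: rn)
  moreover have "(n, \<lambda>s. basis (rnorm q) s - basis (rnorm q) s) \<in> Jx x" using Jx.zero by simp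
  ultimately show ?thesis unfolding good_def by blast
qed

definition coef2 :: "(nat \<Rightarrow> 'f::field) \<Rightarrow> nat \<Rightarrow> 'f" where
  "coef2 x i = (if i = 0 then 0 else x i)"

lemma claim:
  assumes x5: "x 5 = 0" and x6: "x 6 = 0"
  shows "multilinear n (fill (map Leaf as) t) \<Longrightarrow> good x n (basis (fill (map Leaf as) t))"
proof (induction t arbitrary: as rule: wf_induct[OF wf_measures[of "[size, lsize]"]])
  case (1 t)
  show ?case
  proof (cases t)
    case (Leaf a)
    have e: "fill (map Leaf as) t = rnorm (as @ [a])" using fill_rnorm[of "[a]" as] Leaf by simp
    show ?thesis unfolding e by (rule good_rnorm) (use 1(2) e in auto)
  next
    case (Node l r)
    show ?thesis
    proof (cases l)
      case (Leaf a)
      have e: "fill (map Leaf as) t = fill (map Leaf (as @ [a])) r" using Node Leaf by (simp add: fill_snoc)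
      have mr: "(r, t) \<in> measures [size, lsize]" using Node by simp
      have "multilinear n (fill (map Leaf (as @ [a])) r)" using 1(2) e by simp
      then have "good x n (basis (fill (map Leaf (as @ [a])) r))" using 1(1)[rule_format, OF mr] by blast
      then show ?thesis unfolding e .
    next
      case (Node a b)
      note t = \<open>t = Node l r\<close>[unfolded Node]
      define F where "F p = fill (map Leaf as) (ss a b r p)" for p
      have J: "(n, lc (coef x) (F \<circ> pat) 7) \<in> Jx x"
        using S2[of n "map Leaf as" a b r x] 1(2) t by (simp add: F_def comp_def)
      have F0: "F (pat 0) = fill (map Leaf as) t" by (simp add: F_def pat_def t)
      have "(n, \<lambda>s. basis (fill (map Leaf as) t) s - lc (coef2 x) (F \<circ> pat) 7 s) \<in> Jx x"
      proof (rule J_eq[OF J], rule ext)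
        fix s
        show "lc (coef x) (F \<circ> pat) 7 s = basis (fill (map Leaf as) t) s - lc (coef2 x) (F \<circ> pat) 7 s"
          by (simp add: lc_def coef_def coef2_def numeral_eq_Suc F0[symmetric] algebra_simps)
      qed
      moreover have "good x n (lc (coef2 x) (F \<circ> pat) 7)"
      proof (rule good_lc)
        fix i :: nat assume i: "i < 7"
        show "coef2 x i = 0 \<or> good x n (basis ((F \<circ> pat) i))"
        proof (cases "i = 0 \<or> i = 5 \<or> i = 6")
          case True then show ?thesis using x5 x6 by (auto simp: coef2_def)
        next
          case False
          then have i4: "i = 1 \<or> i = 2 \<or> i = 3 \<or> i = 4" using i by auto
          have ms: "mset (leaves (ss a b r (pat i))) = mset (leaves t)"
            using i4 by (auto simp: pat_def t)
          have sz: "(ss a b r (pat i), t) \<in> measures [size, lsize]"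
            using i4 by (auto simp: pat_def t)
          have ml: "multilinear n (fill (map Leaf as) (ss a b r (pat i)))"
            using 1(2) ms by (simp add: multilinear_def)
          show ?thesis using 1(1) sz ml by (auto simp: F_def)
        qed
      qed
      ultimately show ?thesis by (rule good_J)
    qed
  qed
qed

lemma good_sum: "finite S \<Longrightarrow> (\<forall>t\<in>S. good x n (basis t)) \<Longrightarrow> good x n (\<lambda>s. \<Sum>t\<in>S. c t * basis t s)"
proof (induction S rule: finite_induct)
  case empty then show ?case by (simp add: good_zero)
next
  case (insert t S)
  have "good x n (\<lambda>s. c t * basis t s + (\<Sum>t\<in>S. c t * basis t s))"
    using insert by (intro good_add good_smult) auto
  then show ?case using insert by simp
qed

theorem mainTheorem7:
  fixes x :: "nat \<Rightarrow> 'f::field_char_0" and n :: nat and v :: "tree \<Rightarrow> 'f"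
  assumes "x 5 = 0" and "x 6 = 0" and "n \<ge> 1" and "v \<in> Tn n"
  shows "\<exists>w \<in> spanF {basis (right_normed n \<sigma>) | \<sigma>. \<sigma> permutes {1..n}}.
           (n, (\<lambda>s. v s - w s)) \<in> Jx x"
proof -
  let ?S = "{t. v t \<noteq> 0}"
  have fin: "finite ?S" and ml: "\<forall>t\<in>?S. multilinear n t" using assms(4) by (auto simp: Tn_def)
  have "\<forall>t\<in>?S. good x n (basis t)"
    using ml claim[OF assms(1,2), of n "[]"] by simp
  then have "good x n (\<lambda>s. \<Sum>t\<in>?S. v t * basis t s)" by (rule good_sum[OF fin])
  moreover have "(\<lambda>s. \<Sum>t\<in>?S. v t * basis t s) = v"
  proof
    fix s
    have "(\<Sum>t\<in>?S. v t * basis t s) = (\<Sum>t\<in>?S. if t = s then v s else 0)"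
      by (rule sum.cong) (auto simp: basis_def)
    also have "\<dots> = v s" using fin by (simp add: sum.delta)
    finally show "(\<Sum>t\<in>?S. v t * basis t s) = v s" .
  qed
  ultimately have "good x n v" by (simp only:)
  then show ?thesis unfolding good_def .
qed

end
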